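(* Let $G=\mathrm{SL}_3(\mathbb C)$, $B$ the upper-triangular, $U$ the upper unitriangular and $T$ the diagonal matrices in $G$. Let $H$ be the group of matrices $\begin{pmatrix} t&0&a\\0&1&b\\0&0&t^{-1}\end{pmatrix}$ with $a,b\in\mathbb C$, $t\in\mathbb C^\times$, and let $N$ be its subgroup with $t=1$. Then $H$ is a connected solvable spherical subgroup of $G$, $N_G(H)=T\ltimes N$, and $N_G(N_G(H))=N_G(H)\cup\rho N_G(H)$ where $\rho=\begin{pmatrix}0&1&0\\1&0&0\\0&0&-1\end{pmatrix}$. In particular $N_G(N_G(H))\neq N_G(H)$.
   Context: A closed subgroup $H\subset G$ of an algebraic group $G$ is spherical if a Borel subgroup of $G$ has an open orbit on $G/H$. $N_G(K)$ denotes the normalizer of $K$ in $G$. *)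

theory Defs
  imports "HOL-Analysis.Analysis"
begin

type_synonym cmat = "complex^3^3"

definition mat3 :: "complex \<Rightarrow> complex \<Rightarrow> complex \<Rightarrow> complex \<Rightarrow> complex \<Rightarrow> complex
   \<Rightarrow> complex \<Rightarrow> complex \<Rightarrow> complex \<Rightarrow> cmat" where
  "mat3 a11 a12 a13 a21 a22 a23 a31 a32 a33 =
     (\<chi> i j. if i = 1 then (if j = 1 then a11 else if j = 2 then a12 else a13)
            else if i = 2 then (if j = 1 then a21 else if j = 2 then a22 else a23)
            else (if j = 1 then a31 else if j = 2 then a32 else a33))"

definition minv :: "cmat \<Rightarrow> cmat" where
  "minv A = (SOME X. A ** X = mat 1 \<and> X ** A = mat 1)"

definition SL3 :: "cmat set" where
  "SL3 = {A. det A = 1}"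

inductive_set poly_fun :: "(cmat \<Rightarrow> complex) set" where
  pconst: "(\<lambda>A. c) \<in> poly_fun"
| pcoord: "(\<lambda>A. A $ i $ j) \<in> poly_fun"
| padd: "p \<in> poly_fun \<Longrightarrow> q \<in> poly_fun \<Longrightarrow> (\<lambda>A. p A + q A) \<in> poly_fun"
| pmult: "p \<in> poly_fun \<Longrightarrow> q \<in> poly_fun \<Longrightarrow> (\<lambda>A. p A * q A) \<in> poly_fun"

text \<open>Zariski topology on G (induced from affine 9-space).\<close>
definition zclosed :: "cmat set \<Rightarrow> bool" where
  "zclosed S \<longleftrightarrow> (\<exists>P \<subseteq> poly_fun. S = SL3 \<inter> {A. \<forall>p\<in>P. p A = 0})"

definition zopen :: "cmat set \<Rightarrow> bool" where
  "zopen U \<longleftrightarrow> U \<subseteq> SL3 \<and> zclosed (SL3 - U)"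

definition zconnected :: "cmat set \<Rightarrow> bool" where
  "zconnected S \<longleftrightarrow> \<not> (\<exists>U V. zopen U \<and> zopen V \<and> S \<subseteq> U \<union> V \<and> U \<inter> V \<inter> S = {}
                           \<and> U \<inter> S \<noteq> {} \<and> V \<inter> S \<noteq> {})"

definition msubgroup :: "cmat set \<Rightarrow> bool" where
  "msubgroup K \<longleftrightarrow> K \<subseteq> SL3 \<and> mat 1 \<in> K \<and> (\<forall>x\<in>K. \<forall>y\<in>K. x ** y \<in> K)
      \<and> (\<forall>x\<in>K. minv x \<in> K)"

definition closed_subgroup :: "cmat set \<Rightarrow> bool" where
  "closed_subgroup K \<longleftrightarrow> msubgroup K \<and> zclosed K"

definition derived :: "cmat set \<Rightarrow> cmat set" where
  "derived K = \<Inter>{L. msubgroup L \<and>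
      {x ** y ** minv x ** minv y | x y. x \<in> K \<and> y \<in> K} \<subseteq> L}"

definition msolvable :: "cmat set \<Rightarrow> bool" where
  "msolvable K \<longleftrightarrow> (\<exists>n. (derived ^^ n) K = {mat 1})"

definition borel :: "cmat set \<Rightarrow> bool" where
  "borel K \<longleftrightarrow> closed_subgroup K \<and> zconnected K \<and> msolvable K \<and>
     (\<forall>L. closed_subgroup L \<and> zconnected L \<and> msolvable L \<and> K \<subseteq> L \<longrightarrow> L = K)"

text \<open>H spherical: some Borel subgroup has an open orbit on G/H; the orbit of xH
  is open in G/H iff its preimage B x H is open in G.\<close>
definition spherical :: "cmat set \<Rightarrow> bool" where
  "spherical H \<longleftrightarrow> closed_subgroup H \<and>
     (\<exists>Bo. borel Bo \<and> (\<exists>x\<in>SL3. zopen {b ** x ** h | b h. b \<in> Bo \<and> h \<in> H}))"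

definition normalizer :: "cmat set \<Rightarrow> cmat set" where
  "normalizer K = {g \<in> SL3. (\<lambda>h. g ** h ** minv g) ` K = K}"

definition Tdiag :: "cmat set" where
  "Tdiag = {mat3 s 0 0 0 t 0 0 0 u | s t u. s * t * u = 1}"

definition Hgrp :: "cmat set" where
  "Hgrp = {mat3 t 0 a 0 1 b 0 0 (inverse t) | t a b. t \<noteq> 0}"

definition Ngrp :: "cmat set" where
  "Ngrp = {mat3 1 0 a 0 1 b 0 0 1 | a b. True}"

definition rho :: cmat where
  "rho = mat3 0 1 0 1 0 0 0 0 (-1)"

end

theory Submission
  imports Defs
begin

lemma mat3_entries[simp]:
  "mat3 a11 a12 a13 a21 a22 a23 a31 a32 a33 $ 1 $ 1 = a11"
  "mat3 a11 a12 a13 a21 a22 a23 a31 a32 a33 $ 1 $ 2 = a12"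
  "mat3 a11 a12 a13 a21 a22 a23 a31 a32 a33 $ 1 $ 3 = a13"
  "mat3 a11 a12 a13 a21 a22 a23 a31 a32 a33 $ 2 $ 1 = a21"
  "mat3 a11 a12 a13 a21 a22 a23 a31 a32 a33 $ 2 $ 2 = a22"
  "mat3 a11 a12 a13 a21 a22 a23 a31 a32 a33 $ 2 $ 3 = a23"
  "mat3 a11 a12 a13 a21 a22 a23 a31 a32 a33 $ 3 $ 1 = a31"
  "mat3 a11 a12 a13 a21 a22 a23 a31 a32 a33 $ 3 $ 2 = a32"
  "mat3 a11 a12 a13 a21 a22 a23 a31 a32 a33 $ 3 $ 3 = a33"
  by (simp_all add: mat3_def)

lemma mat3_eta: "A = mat3 (A$1$1) (A$1$2) (A$1$3) (A$2$1) (A$2$2) (A$2$3) (A$3$1) (A$3$2) (A$3$3)"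
  unfolding mat3_def
  by (simp add: vec_eq_iff) (metis exhaust_3)

lemma mat3_eq_iff: "(A::cmat) = B \<longleftrightarrow> (\<forall>i j. A$i$j = B$i$j)"
  by (simp add: vec_eq_iff)

lemma mat3_eq: "mat3 a11 a12 a13 a21 a22 a23 a31 a32 a33 = mat3 b11 b12 b13 b21 b22 b23 b31 b32 b33
  \<longleftrightarrow> a11 = b11 \<and> a12 = b12 \<and> a13 = b13 \<and> a21 = b21 \<and> a22 = b22 \<and> a23 = b23 \<and> a31 = b31 \<and> a32 = b32 \<and> a33 = b33"
  apply (simp add: mat3_eq_iff forall_3)
  done

lemma mat3_mult: "mat3 a11 a12 a13 a21 a22 a23 a31 a32 a33 ** mat3 b11 b12 b13 b21 b22 b23 b31 b32 b33
  = mat3 (a11*b11+a12*b21+a13*b31) (a11*b12+a12*b22+a13*b32) (a11*b13+a12*b23+a13*b33)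
         (a21*b11+a22*b21+a23*b31) (a21*b12+a22*b22+a23*b32) (a21*b13+a22*b23+a23*b33)
         (a31*b11+a32*b21+a33*b31) (a31*b12+a32*b22+a33*b32) (a31*b13+a32*b23+a33*b33)"
  by (simp add: mat3_eq_iff forall_3 matrix_matrix_mult_def sum_3)

lemma mat3_one: "mat 1 = mat3 1 0 0 0 1 0 0 0 1"
  by (simp add: mat3_eq_iff forall_3 mat_def)

lemma mat3_det: "det (mat3 a11 a12 a13 a21 a22 a23 a31 a32 a33) =
   a11*a22*a33 - a11*a23*a32 - a12*a21*a33 + a12*a23*a31 + a13*a21*a32 - a13*a22*a31"
  by (simp add: det_3 algebra_simps)

lemma minv_unique:
  assumes "A ** X = mat 1" "X ** A = mat 1"
  shows "minv A = X"
proof -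
  have ex: "\<exists>Y. A ** Y = mat 1 \<and> Y ** A = mat 1" using assms by blast
  define Y where "Y = minv A"
  have Y: "A ** Y = mat 1 \<and> Y ** A = mat 1" unfolding Y_def minv_def by (rule someI_ex[OF ex])
  have "Y = Y ** (A ** X)" using assms by (simp add: matrix_mul_rid)
  also have "\<dots> = (Y ** A) ** X" by (simp add: matrix_mul_assoc)
  also have "\<dots> = X" using Y by (simp add: matrix_mul_lid)
  finally show ?thesis unfolding Y_def .
qed

definition cofm :: "complex \<Rightarrow> complex \<Rightarrow> complex \<Rightarrow> complex \<Rightarrow> complex \<Rightarrow> complex
   \<Rightarrow> complex \<Rightarrow> complex \<Rightarrow> complex \<Rightarrow> cmat" where
  "cofm a11 a12 a13 a21 a22 a23 a31 a32 a33 =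
    mat3 (a22*a33 - a23*a32) (a13*a32 - a12*a33) (a12*a23 - a13*a22)
         (a23*a31 - a21*a33) (a11*a33 - a13*a31) (a13*a21 - a11*a23)
         (a21*a32 - a22*a31) (a12*a31 - a11*a32) (a11*a22 - a12*a21)"

lemma minv_mat3:
  assumes "det (mat3 a11 a12 a13 a21 a22 a23 a31 a32 a33) = 1"
  shows "minv (mat3 a11 a12 a13 a21 a22 a23 a31 a32 a33) =
    mat3 (a22*a33 - a23*a32) (a13*a32 - a12*a33) (a12*a23 - a13*a22)
         (a23*a31 - a21*a33) (a11*a33 - a13*a31) (a13*a21 - a11*a23)
         (a21*a32 - a22*a31) (a12*a31 - a11*a32) (a11*a22 - a12*a21)"
proof -
  have d: "a11 * a22 * a33 - a11 * a23 * a32 - a12 * a21 * a33 + a12 * a23 * a31 + a13 * a21 * a32 - a13 * a22 * a31 = 1"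
    using assms unfolding mat3_det .
  have "minv (mat3 a11 a12 a13 a21 a22 a23 a31 a32 a33) = cofm a11 a12 a13 a21 a22 a23 a31 a32 a33"
  proof (rule minv_unique)
    show "mat3 a11 a12 a13 a21 a22 a23 a31 a32 a33 ** cofm a11 a12 a13 a21 a22 a23 a31 a32 a33 = mat 1"
      unfolding cofm_def mat3_mult mat3_one mat3_eq using d by (simp add: algebra_simps)
    show "cofm a11 a12 a13 a21 a22 a23 a31 a32 a33 ** mat3 a11 a12 a13 a21 a22 a23 a31 a32 a33 = mat 1"
      unfolding cofm_def mat3_mult mat3_one mat3_eq using d by (simp add: algebra_simps)
  qed
  then show ?thesis by (simp add: cofm_def)
qed

lemma SL3_inv:
  assumes "A \<in> SL3"
  shows "A ** minv A = mat 1" "minv A ** A = mat 1" "minv A \<in> SL3"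
proof -
  have "det A \<noteq> 0" using assms by (simp add: SL3_def)
  then have "invertible A" by (simp add: invertible_det_nz)
  then obtain B where B: "A ** B = mat 1" "B ** A = mat 1" unfolding invertible_def by blast
  then have m: "minv A = B" by (rule minv_unique)
  show "A ** minv A = mat 1" "minv A ** A = mat 1" using B m by auto
  have "det A * det B = 1" using B(1) by (metis det_mul det_I)
  then show "minv A \<in> SL3" using assms m by (simp add: SL3_def)
qed

lemma SL3_mult: "A \<in> SL3 \<Longrightarrow> B \<in> SL3 \<Longrightarrow> A ** B \<in> SL3"
  by (simp add: SL3_def det_mul)

lemma mult_entry: "((A::cmat) ** B) $ i $ j = A$i$1*B$1$j + A$i$2*B$2$j + A$i$3*B$3$j"
  by (simp add: matrix_matrix_mult_def sum_3)

lemma det_entries: "det (A::cmat) = A$1$1*A$2$2*A$3$3 - A$1$1*A$2$3*A$3$2 - A$1$2*A$2$1*A$3$3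
   + A$1$2*A$2$3*A$3$1 + A$1$3*A$2$1*A$3$2 - A$1$3*A$2$2*A$3$1"
  by (subst mat3_eta) (simp only: mat3_det)

definition cof3 :: "cmat \<Rightarrow> cmat" where
  "cof3 A = mat3 (A$2$2*A$3$3 - A$2$3*A$3$2) (A$1$3*A$3$2 - A$1$2*A$3$3) (A$1$2*A$2$3 - A$1$3*A$2$2)
                 (A$2$3*A$3$1 - A$2$1*A$3$3) (A$1$1*A$3$3 - A$1$3*A$3$1) (A$1$3*A$2$1 - A$1$1*A$2$3)
                 (A$2$1*A$3$2 - A$2$2*A$3$1) (A$1$2*A$3$1 - A$1$1*A$3$2) (A$1$1*A$2$2 - A$1$2*A$2$1)"

lemma minv_cof: assumes "det A = 1" shows "minv A = cof3 A"
proof -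
  have "minv A = minv (mat3 (A$1$1) (A$1$2) (A$1$3) (A$2$1) (A$2$2) (A$2$3) (A$3$1) (A$3$2) (A$3$3))"
    by (subst mat3_eta, rule refl)
  also have "\<dots> = cof3 A"
    by (subst minv_mat3) (use assms in \<open>simp_all add: det_entries mat3_det cof3_def\<close>)
  finally show ?thesis .
qed

lemma minv_entries: assumes "A \<in> SL3"
  shows "minv A $1$1 = A$2$2*A$3$3 - A$2$3*A$3$2" "minv A $1$2 = A$1$3*A$3$2 - A$1$2*A$3$3"
    "minv A $1$3 = A$1$2*A$2$3 - A$1$3*A$2$2"
    "minv A $2$1 = A$2$3*A$3$1 - A$2$1*A$3$3" "minv A $2$2 = A$1$1*A$3$3 - A$1$3*A$3$1"
    "minv A $2$3 = A$1$3*A$2$1 - A$1$1*A$2$3"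
    "minv A $3$1 = A$2$1*A$3$2 - A$2$2*A$3$1" "minv A $3$2 = A$1$2*A$3$1 - A$1$1*A$3$2"
    "minv A $3$3 = A$1$1*A$2$2 - A$1$2*A$2$1"
  using assms by (simp_all add: minv_cof SL3_def cof3_def)

lemma SL3_det: "A \<in> SL3 \<longleftrightarrow> A$1$1*A$2$2*A$3$3 - A$1$1*A$2$3*A$3$2 - A$1$2*A$2$1*A$3$3
   + A$1$2*A$2$3*A$3$1 + A$1$3*A$2$1*A$3$2 - A$1$3*A$2$2*A$3$1 = 1"
  by (simp add: SL3_def det_entries)

lemma msubgroupI:
  assumes "K \<subseteq> SL3" "mat 1 \<in> K" "\<And>x y. x \<in> K \<Longrightarrow> y \<in> K \<Longrightarrow> x ** y \<in> K"
    "\<And>x. x \<in> K \<Longrightarrow> minv x \<in> K"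
  shows "msubgroup K"
  using assms unfolding msubgroup_def by blast

lemma one_entries: "mat 1 $ i $ j = (if i = j then (1::complex) else 0)"
  by (simp add: mat_def)

lemma H_char: "A \<in> Hgrp \<longleftrightarrow> A$2$1 = 0 \<and> A$3$1 = 0 \<and> A$3$2 = 0 \<and> A$1$2 = 0 \<and> A$2$2 = 1 \<and> A \<in> SL3"
proof
  assume "A \<in> Hgrp"
  then obtain t a b where "t \<noteq> 0" "A = mat3 t 0 a 0 1 b 0 0 (inverse t)" unfolding Hgrp_def by blast
  then show "A$2$1 = 0 \<and> A$3$1 = 0 \<and> A$3$2 = 0 \<and> A$1$2 = 0 \<and> A$2$2 = 1 \<and> A \<in> SL3"
    by (simp add: SL3_def mat3_det)
next
  assume a: "A$2$1 = 0 \<and> A$3$1 = 0 \<and> A$3$2 = 0 \<and> A$1$2 = 0 \<and> A$2$2 = 1 \<and> A \<in> SL3"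
  then have d: "A$1$1 * A$3$3 = 1" by (auto simp: SL3_det)
  then have "A$1$1 \<noteq> 0" "A$3$3 = inverse (A$1$1)" using inverse_unique[OF d] by auto
  moreover have "A = mat3 (A$1$1) 0 (A$1$3) 0 1 (A$2$3) 0 0 (A$3$3)"
    using a by (subst mat3_eta) simp
  ultimately show "A \<in> Hgrp" unfolding Hgrp_def by (intro CollectI exI[of _ "A$1$1"] exI[of _ "A$1$3"] exI[of _ "A$2$3"]) metis
qed

definition Bup :: "cmat set" where
  "Bup = {A. A$2$1 = 0 \<and> A$3$1 = 0 \<and> A$3$2 = 0 \<and> A \<in> SL3}"

definition Mset :: "cmat set" where
  "Mset = {A. A$2$1 = 0 \<and> A$3$1 = 0 \<and> A$3$2 = 0 \<and> A$1$2 = 0 \<and> A \<in> SL3}"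

lemma one_SL3: "mat 1 \<in> SL3" by (simp add: SL3_def)

lemma H_sub: "msubgroup Hgrp"
proof (rule msubgroupI)
  show "Hgrp \<subseteq> SL3" by (auto simp: H_char)
  show "mat 1 \<in> Hgrp" by (simp add: H_char one_SL3 one_entries)
  show "x ** y \<in> Hgrp" if "x \<in> Hgrp" "y \<in> Hgrp" for x y
    using that by (simp add: H_char SL3_mult mult_entry)
  show "minv x \<in> Hgrp" if "x \<in> Hgrp" for x
    using that by (auto simp: H_char SL3_inv minv_entries SL3_det mult.commute)
qed

lemma Bup_sub: "msubgroup Bup"
proof (rule msubgroupI)
  show "Bup \<subseteq> SL3" by (auto simp: Bup_def)
  show "mat 1 \<in> Bup" by (simp add: Bup_def one_SL3 one_entries)
  show "x ** y \<in> Bup" if "x \<in> Bup" "y \<in> Bup" for x y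
    using that by (simp add: Bup_def SL3_mult mult_entry)
  show "minv x \<in> Bup" if "x \<in> Bup" for x
    using that by (simp add: Bup_def SL3_inv minv_entries)
qed

lemma Mset_sub: "msubgroup Mset"
proof (rule msubgroupI)
  show "Mset \<subseteq> SL3" by (auto simp: Mset_def)
  show "mat 1 \<in> Mset" by (simp add: Mset_def one_SL3 one_entries)
  show "x ** y \<in> Mset" if "x \<in> Mset" "y \<in> Mset" for x y
    using that by (simp add: Mset_def SL3_mult mult_entry)
  show "minv x \<in> Mset" if "x \<in> Mset" for x
    using that by (simp add: Mset_def SL3_inv minv_entries)
qed

lemma pf_coord: "(\<lambda>A. A $ i $ j) \<in> poly_fun" by (rule poly_fun.pcoord)

lemma H_zclosed: "zclosed Hgrp"
  unfolding zclosed_def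
proof (intro exI conjI)
  let ?P = "{(\<lambda>A. A$2$1), (\<lambda>A. A$3$1), (\<lambda>A. A$3$2), (\<lambda>A. A$1$2), (\<lambda>A. A$2$2 + (-1))}"
  have "(\<lambda>A. A$2$2 + (-1)) \<in> poly_fun" by (intro poly_fun.intros)
  then show "?P \<subseteq> poly_fun" by (auto intro: poly_fun.intros)
  show "Hgrp = SL3 \<inter> {A. \<forall>p\<in>?P. p A = 0}"
    by (auto simp: H_char)
qed

lemma Bup_zclosed: "zclosed Bup"
  unfolding zclosed_def
proof (intro exI conjI)
  let ?P = "{(\<lambda>A. A$2$1), (\<lambda>A. A$3$1), (\<lambda>A. A$3$2)}"
  show "?P \<subseteq> poly_fun" by (auto intro: poly_fun.intros)
  show "Bup = SL3 \<inter> {A. \<forall>p\<in>?P. p A = 0}"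
    by (auto simp: Bup_def)
qed

definition good :: "complex poly \<Rightarrow> (complex \<Rightarrow> complex) \<Rightarrow> bool" where
  "good D f \<longleftrightarrow> (\<exists>k r. \<forall>z. poly D z \<noteq> 0 \<longrightarrow> poly D z ^ k * f z = poly r z)"

lemma good_const: "good D (\<lambda>z. c)"
  unfolding good_def by (rule exI[of _ 0], rule exI[of _ "[:c:]"]) simp

lemma good_poly: "good D (\<lambda>z. poly r z)"
  unfolding good_def by (rule exI[of _ 0], rule exI[of _ r]) simp

lemma good_inv: "good D (\<lambda>z. inverse (poly D z))"
  unfolding good_def by (rule exI[of _ 1], rule exI[of _ 1]) simp

lemma good_add: assumes "good D f" "good D g" shows "good D (\<lambda>z. f z + g z)"
proof -
  obtain k1 r1 where 1: "\<forall>z. poly D z \<noteq> 0 \<longrightarrow> poly D z ^ k1 * f z = poly r1 z" using assms(1) good_def by auto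
  obtain k2 r2 where 2: "\<forall>z. poly D z \<noteq> 0 \<longrightarrow> poly D z ^ k2 * g z = poly r2 z" using assms(2) good_def by auto
  show ?thesis unfolding good_def
  proof (intro exI allI impI)
    fix z assume z: "poly D z \<noteq> 0"
    have "poly D z ^ (k1 + k2) * (f z + g z) = poly D z ^ k2 * (poly D z ^ k1 * f z) + poly D z ^ k1 * (poly D z ^ k2 * g z)"
      by (simp add: power_add algebra_simps)
    also have "\<dots> = poly (D ^ k2 * r1 + D ^ k1 * r2) z" using 1 2 z by (simp add: poly_power)
    finally show "poly D z ^ (k1 + k2) * (f z + g z) = poly (D ^ k2 * r1 + D ^ k1 * r2) z" .
  qed
qed

lemma good_mult: assumes "good D f" "good D g" shows "good D (\<lambda>z. f z * g z)"
proof -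
  obtain k1 r1 where 1: "\<forall>z. poly D z \<noteq> 0 \<longrightarrow> poly D z ^ k1 * f z = poly r1 z" using assms(1) good_def by auto
  obtain k2 r2 where 2: "\<forall>z. poly D z \<noteq> 0 \<longrightarrow> poly D z ^ k2 * g z = poly r2 z" using assms(2) good_def by auto
  show ?thesis unfolding good_def
  proof (intro exI allI impI)
    fix z assume z: "poly D z \<noteq> 0"
    have "poly D z ^ (k1 + k2) * (f z * g z) = (poly D z ^ k1 * f z) * (poly D z ^ k2 * g z)"
      by (simp add: power_add algebra_simps)
    also have "\<dots> = poly (r1 * r2) z" using 1 2 z by simp
    finally show "poly D z ^ (k1 + k2) * (f z * g z) = poly (r1 * r2) z" .
  qed
qed

lemma good_pf:
  assumes "p \<in> poly_fun" "\<And>i j. good D (\<lambda>z. \<gamma> z $ i $ j)"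
  shows "good D (\<lambda>z. p (\<gamma> z))"
  using assms(1)
proof induction
  case (pconst c) then show ?case by (rule good_const)
next
  case (pcoord i j) then show ?case using assms(2) .
next
  case (padd p q) then show ?case by (intro good_add) auto
next
  case (pmult p q) then show ?case by (intro good_mult) auto
qed

lemma good_mat3:
  assumes "good D f11" "good D f12" "good D f13" "good D f21" "good D f22" "good D f23"
    "good D f31" "good D f32" "good D f33"
  shows "good D (\<lambda>z. mat3 (f11 z) (f12 z) (f13 z) (f21 z) (f22 z) (f23 z) (f31 z) (f32 z) (f33 z) $ i $ j)"
proof -
  have "i = 1 \<or> i = 2 \<or> i = 3" "j = 1 \<or> j = 2 \<or> j = 3" by (rule exhaust_3)+
  then show ?thesis using assms by (elim disjE) (simp_all add: mat3_entries)
qed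

lemma curve_contra:
  assumes D0: "poly D 0 \<noteq> 0" and D1: "poly D 1 \<noteq> 0"
    and gf: "good D f" and gg: "good D g" and f0: "f 0 \<noteq> 0" and g1: "g 1 \<noteq> 0"
    and fg: "\<And>z. poly D z \<noteq> 0 \<Longrightarrow> f z * g z = 0"
  shows False
proof -
  obtain k1 r1 where 1: "\<forall>z. poly D z \<noteq> 0 \<longrightarrow> poly D z ^ k1 * f z = poly r1 z" using gf good_def by auto
  obtain k2 r2 where 2: "\<forall>z. poly D z \<noteq> 0 \<longrightarrow> poly D z ^ k2 * g z = poly r2 z" using gg good_def by auto
  have "poly r1 0 \<noteq> 0" using 1 D0 f0 by (metis mult_eq_0_iff power_eq_0_iff)
  then have r1: "r1 \<noteq> 0" by auto
  have "poly r2 1 \<noteq> 0" using 2 D1 g1 by (metis mult_eq_0_iff power_eq_0_iff)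
  then have r2: "r2 \<noteq> 0" by auto
  have D: "D \<noteq> 0" using D0 by auto
  have fin: "finite {z. poly (r1 * r2) z = 0}" using r1 r2 by (simp add: poly_roots_finite)
  have finD: "finite {z. poly D z = 0}" using D by (simp add: poly_roots_finite)
  have "{z. poly D z \<noteq> 0} \<subseteq> {z. poly (r1 * r2) z = 0}"
  proof
    fix z assume "z \<in> {z. poly D z \<noteq> 0}"
    then have z: "poly D z \<noteq> 0" by simp
    have "poly (r1 * r2) z = (poly D z ^ k1 * f z) * (poly D z ^ k2 * g z)" using 1 2 z by simp
    also have "\<dots> = poly D z ^ k1 * poly D z ^ k2 * (f z * g z)" by (simp add: algebra_simps)
    also have "\<dots> = 0" using fg[OF z] by simp
    finally show "z \<in> {z. poly (r1 * r2) z = 0}" by simp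
  qed
  then have "finite {z. poly D z \<noteq> 0}" using fin finite_subset by blast
  then have "finite ({z. poly D z \<noteq> 0} \<union> {z. poly D z = 0})" using finD by simp
  moreover have "{z. poly D z \<noteq> 0} \<union> {z. poly D z = 0} = (UNIV :: complex set)" by auto
  ultimately show False by (simp add: infinite_UNIV_char_0)
qed

lemma zconnected_curve:
  assumes sub: "X \<subseteq> SL3"
    and curve: "\<And>h1 h2. h1 \<in> X \<Longrightarrow> h2 \<in> X \<Longrightarrow> \<exists>D \<gamma>. poly D 0 \<noteq> 0 \<and> poly D 1 \<noteq> 0 \<and>
       \<gamma> 0 = h1 \<and> \<gamma> 1 = h2 \<and> (\<forall>z. poly D z \<noteq> 0 \<longrightarrow> \<gamma> z \<in> X) \<and> (\<forall>i j. good D (\<lambda>z. \<gamma> z $ i $ j))"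
  shows "zconnected X"
  unfolding zconnected_def
proof
  assume "\<exists>U V. zopen U \<and> zopen V \<and> X \<subseteq> U \<union> V \<and> U \<inter> V \<inter> X = {} \<and> U \<inter> X \<noteq> {} \<and> V \<inter> X \<noteq> {}"
  then obtain U V where U: "zopen U" and V: "zopen V" and cov: "X \<subseteq> U \<union> V" and dis: "U \<inter> V \<inter> X = {}"
    and ne1: "U \<inter> X \<noteq> {}" and ne2: "V \<inter> X \<noteq> {}" by blast
  obtain P where P: "P \<subseteq> poly_fun" "SL3 - U = SL3 \<inter> {A. \<forall>p\<in>P. p A = 0}"
    using U unfolding zopen_def zclosed_def by blast
  obtain Q where Q: "Q \<subseteq> poly_fun" "SL3 - V = SL3 \<inter> {A. \<forall>p\<in>Q. p A = 0}"
    using V unfolding zopen_def zclosed_def by blast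
  obtain h1 where h1: "h1 \<in> U" "h1 \<in> X" using ne1 by blast
  obtain h2 where h2: "h2 \<in> V" "h2 \<in> X" using ne2 by blast
  have "h1 \<notin> SL3 - U" using h1 by simp
  then obtain p where p: "p \<in> P" "p h1 \<noteq> 0" using P(2) h1 sub by blast
  have "h2 \<notin> SL3 - V" using h2 by simp
  then obtain q where q: "q \<in> Q" "q h2 \<noteq> 0" using Q(2) h2 sub by blast
  have pq: "p x * q x = 0" if x: "x \<in> X" for x
  proof (cases "x \<in> U")
    case True
    then have "x \<notin> V" using dis x by blast
    then have "x \<in> SL3 - V" using x sub by blast
    then show ?thesis using Q(2) q by auto
  next
    case False
    then have "x \<in> SL3 - U" using x sub by blast
    then show ?thesis using P(2) p by auto
  qed
  obtain D \<gamma> where c: "poly D 0 \<noteq> 0" "poly D 1 \<noteq> 0" "\<gamma> 0 = h1" "\<gamma> 1 = h2"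
    "\<forall>z. poly D z \<noteq> 0 \<longrightarrow> \<gamma> z \<in> X" "\<forall>i j. good D (\<lambda>z. \<gamma> z $ i $ j)"
    using curve[OF h1(2) h2(2)] by blast
  have gp: "good D (\<lambda>z. p (\<gamma> z))" using good_pf[of p D \<gamma>] p P(1) c(6) by blast
  have gq: "good D (\<lambda>z. q (\<gamma> z))" using good_pf[of q D \<gamma>] q Q(1) c(6) by blast
  show False
    by (rule curve_contra[OF c(1) c(2) gp gq]) (use c p q pq in auto)
qed

lemma H_zconnected: "zconnected Hgrp"
proof (rule zconnected_curve)
  show "Hgrp \<subseteq> SL3" by (auto simp: H_char)
  fix h1 h2 assume "h1 \<in> Hgrp" "h2 \<in> Hgrp"
  then obtain t1 a1 b1 t2 a2 b2 where t: "t1 \<noteq> 0" "t2 \<noteq> 0"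
    and h: "h1 = mat3 t1 0 a1 0 1 b1 0 0 (inverse t1)" "h2 = mat3 t2 0 a2 0 1 b2 0 0 (inverse t2)"
    unfolding Hgrp_def by blast
  define D where "D = [:t1, t2 - t1:]"
  define \<gamma> where "\<gamma> = (\<lambda>z. mat3 (poly D z) 0 (poly [:a1, a2 - a1:] z) 0 1 (poly [:b1, b2 - b1:] z)
     0 0 (inverse (poly D z)))"
  have "poly D 0 \<noteq> 0 \<and> poly D 1 \<noteq> 0 \<and> \<gamma> 0 = h1 \<and> \<gamma> 1 = h2 \<and> (\<forall>z. poly D z \<noteq> 0 \<longrightarrow> \<gamma> z \<in> Hgrp)
     \<and> (\<forall>i j. good D (\<lambda>z. \<gamma> z $ i $ j))"
  proof (intro conjI allI impI)
    show "poly D 0 \<noteq> 0" "poly D 1 \<noteq> 0" using t by (simp_all add: D_def)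
    show "\<gamma> 0 = h1" "\<gamma> 1 = h2" by (simp_all add: \<gamma>_def D_def h)
    show "\<gamma> z \<in> Hgrp" if "poly D z \<noteq> 0" for z
      unfolding \<gamma>_def Hgrp_def using that by blast
    show "good D (\<lambda>z. \<gamma> z $ i $ j)" for i j
      unfolding \<gamma>_def by (intro good_mat3 good_const good_poly good_inv)
  qed
  then show "\<exists>D \<gamma>. poly D 0 \<noteq> 0 \<and> poly D 1 \<noteq> 0 \<and> \<gamma> 0 = h1 \<and> \<gamma> 1 = h2 \<and> (\<forall>z. poly D z \<noteq> 0 \<longrightarrow> \<gamma> z \<in> Hgrp)
     \<and> (\<forall>i j. good D (\<lambda>z. \<gamma> z $ i $ j))" by blast
qed

lemma Bup_mat3: assumes "A \<in> Bup"
  shows "A = mat3 (A$1$1) (A$1$2) (A$1$3) 0 (A$2$2) (A$2$3) 0 0 (inverse (A$1$1 * A$2$2))"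
    "A$1$1 \<noteq> 0" "A$2$2 \<noteq> 0"
proof -
  have z: "A$2$1 = 0" "A$3$1 = 0" "A$3$2 = 0" and d: "A$1$1 * A$2$2 * A$3$3 = 1"
    using assms by (auto simp: Bup_def SL3_det)
  have "A$3$3 = inverse (A$1$1 * A$2$2)" using inverse_unique[OF d] by simp
  then show "A = mat3 (A$1$1) (A$1$2) (A$1$3) 0 (A$2$2) (A$2$3) 0 0 (inverse (A$1$1 * A$2$2))"
    using z by (subst mat3_eta) simp
  show "A$1$1 \<noteq> 0" "A$2$2 \<noteq> 0" using d by auto
qed

lemma Bup_zconnected: "zconnected Bup"
proof (rule zconnected_curve)
  show "Bup \<subseteq> SL3" by (auto simp: Bup_def)
  fix h1 h2 assume h1: "h1 \<in> Bup" and h2: "h2 \<in> Bup"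
  define S where "S = [:h1$1$1, h2$1$1 - h1$1$1:]"
  define T where "T = [:h1$2$2, h2$2$2 - h1$2$2:]"
  define D where "D = S * T"
  define \<gamma> where "\<gamma> = (\<lambda>z. mat3 (poly S z) (poly [:h1$1$2, h2$1$2 - h1$1$2:] z) (poly [:h1$1$3, h2$1$3 - h1$1$3:] z)
     0 (poly T z) (poly [:h1$2$3, h2$2$3 - h1$2$3:] z)  0 0 (inverse (poly D z)))"
  note e1 = Bup_mat3[OF h1] and e2 = Bup_mat3[OF h2]
  have pST: "poly S 1 = h2$1$1" "poly T 1 = h2$2$2" by (simp_all add: S_def T_def)
  have "poly D 0 \<noteq> 0 \<and> poly D 1 \<noteq> 0 \<and> \<gamma> 0 = h1 \<and> \<gamma> 1 = h2 \<and> (\<forall>z. poly D z \<noteq> 0 \<longrightarrow> \<gamma> z \<in> Bup)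
     \<and> (\<forall>i j. good D (\<lambda>z. \<gamma> z $ i $ j))"
  proof (intro conjI allI impI)
    show "poly D 0 \<noteq> 0" using e1 e2 by (simp_all add: D_def S_def T_def)
    show "poly D 1 \<noteq> 0" using e2 pST by (simp add: D_def)
    show "\<gamma> 0 = h1" by (subst e1(1)) (simp add: \<gamma>_def D_def S_def T_def mult.commute)
    show "\<gamma> 1 = h2" using pST by (subst e2(1)) (simp add: \<gamma>_def D_def mult.commute)
    show "\<gamma> z \<in> Bup" if "poly D z \<noteq> 0" for z
      using that by (simp add: \<gamma>_def Bup_def SL3_def mat3_det D_def field_simps)
    show "good D (\<lambda>z. \<gamma> z $ i $ j)" for i j
      unfolding \<gamma>_def by (intro good_mat3 good_const good_poly good_inv)
  qed
  then show "\<exists>D \<gamma>. poly D 0 \<noteq> 0 \<and> poly D 1 \<noteq> 0 \<and> \<gamma> 0 = h1 \<and> \<gamma> 1 = h2 \<and> (\<forall>z. poly D z \<noteq> 0 \<longrightarrow> \<gamma> z \<in> Bup)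
     \<and> (\<forall>i j. good D (\<lambda>z. \<gamma> z $ i $ j))" by blast
qed

lemma one_derived: "mat 1 \<in> derived K"
  unfolding derived_def msubgroup_def by blast

lemma derived_le:
  assumes "msubgroup M" "\<And>x y. x \<in> K \<Longrightarrow> y \<in> K \<Longrightarrow> x ** y ** minv x ** minv y \<in> M"
  shows "derived K \<subseteq> M"
  unfolding derived_def using assms by blast

lemma derived_mono: "K \<subseteq> K' \<Longrightarrow> derived K \<subseteq> derived K'"
  unfolding derived_def by blast

lemma comm_derived: "x \<in> K \<Longrightarrow> y \<in> K \<Longrightarrow> x ** y ** minv x ** minv y \<in> derived K"
  unfolding derived_def by blast

lemma derived_sub:
  assumes "K \<subseteq> SL3"
  shows "msubgroup (derived K)"
proof -
  have comm: "x ** y ** minv x ** minv y \<in> SL3" if "x \<in> K" "y \<in> K" for x y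
    using that assms by (meson SL3_inv(3) SL3_mult subsetD)
  have SLsub: "msubgroup SL3" unfolding msubgroup_def using one_SL3 SL3_mult SL3_inv(3) by blast
  have "derived K \<subseteq> SL3" by (rule derived_le[OF SLsub comm])
  moreover have "x ** y \<in> derived K" if "x \<in> derived K" "y \<in> derived K" for x y
    using that unfolding derived_def msubgroup_def by blast
  moreover have "minv x \<in> derived K" if "x \<in> derived K" for x
    using that unfolding derived_def msubgroup_def by blast
  ultimately show ?thesis unfolding msubgroup_def using one_derived by blast
qed

definition U1 :: "cmat set" where
  "U1 = {A. A$2$1 = 0 \<and> A$3$1 = 0 \<and> A$3$2 = 0 \<and> A$1$1 = 1 \<and> A$2$2 = 1 \<and> A$3$3 = 1}"

definition Z1 :: "cmat set" where
  "Z1 = {A. A$2$1 = 0 \<and> A$3$1 = 0 \<and> A$3$2 = 0 \<and> A$1$1 = 1 \<and> A$2$2 = 1 \<and> A$3$3 = 1 \<and> A$1$2 = 0 \<and> A$2$3 = 0}"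

lemma U1_SL3: "A \<in> U1 \<Longrightarrow> A \<in> SL3" by (auto simp: U1_def SL3_det)
lemma Z1_SL3: "A \<in> Z1 \<Longrightarrow> A \<in> SL3" by (auto simp: Z1_def SL3_det)

lemma U1_sub: "msubgroup U1"
proof (rule msubgroupI)
  show "U1 \<subseteq> SL3" using U1_SL3 by blast
  show "mat 1 \<in> U1" by (simp add: U1_def one_entries)
  show "x ** y \<in> U1" if "x \<in> U1" "y \<in> U1" for x y
    using that by (simp add: U1_def mult_entry)
  show "minv x \<in> U1" if "x \<in> U1" for x
    using that U1_SL3[OF that] by (simp add: U1_def minv_entries)
qed

lemma Z1_sub: "msubgroup Z1"
proof (rule msubgroupI)
  show "Z1 \<subseteq> SL3" using Z1_SL3 by blast
  show "mat 1 \<in> Z1" by (simp add: Z1_def one_entries)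
  show "x ** y \<in> Z1" if "x \<in> Z1" "y \<in> Z1" for x y
    using that by (simp add: Z1_def mult_entry)
  show "minv x \<in> Z1" if "x \<in> Z1" for x
    using that Z1_SL3[OF that] by (simp add: Z1_def minv_entries)
qed

lemma one_sub: "msubgroup {mat 1}"
  by (rule msubgroupI) (auto simp: one_SL3 minv_unique)

lemma Bup_comm: assumes "x \<in> Bup" "y \<in> Bup" shows "x ** y ** minv x ** minv y \<in> U1"
proof -
  have sx: "x \<in> SL3" and sy: "y \<in> SL3" using assms by (auto simp: Bup_def)
  have zx: "x$2$1 = 0" "x$3$1 = 0" "x$3$2 = 0" "x$3$3 = inverse (x$1$1 * x$2$2)" "x$1$1 \<noteq> 0" "x$2$2 \<noteq> 0"
    using Bup_mat3[OF assms(1)] assms(1) by (auto simp: Bup_def) (metis mat3_entries(9))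
  have zy: "y$2$1 = 0" "y$3$1 = 0" "y$3$2 = 0" "y$3$3 = inverse (y$1$1 * y$2$2)" "y$1$1 \<noteq> 0" "y$2$2 \<noteq> 0"
    using Bup_mat3[OF assms(2)] assms(2) by (auto simp: Bup_def) (metis mat3_entries(9))
  show ?thesis
    by (simp add: U1_def mult_entry minv_entries[OF sx] minv_entries[OF sy] zx zy field_simps)
qed

lemma U1_comm: assumes "x \<in> U1" "y \<in> U1" shows "x ** y ** minv x ** minv y \<in> Z1"
  using assms U1_SL3[OF assms(1)] U1_SL3[OF assms(2)]
  by (simp add: U1_def Z1_def mult_entry minv_entries algebra_simps)

lemma Z1_comm: assumes "x \<in> Z1" "y \<in> Z1" shows "x ** y ** minv x ** minv y \<in> {mat 1}"
  using assms Z1_SL3[OF assms(1)] Z1_SL3[OF assms(2)]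
  by (simp add: Z1_def mat3_eq_iff forall_3 one_entries mult_entry minv_entries)

lemma Bup_solvable: "msolvable Bup"
proof -
  have 1: "derived Bup \<subseteq> U1" by (rule derived_le[OF U1_sub Bup_comm])
  have 2: "derived U1 \<subseteq> Z1" by (rule derived_le[OF Z1_sub U1_comm])
  have 3: "derived Z1 \<subseteq> {mat 1}" by (rule derived_le[OF one_sub Z1_comm])
  have "derived (derived (derived Bup)) \<subseteq> {mat 1}"
    using derived_mono[OF derived_mono[OF 1]] derived_mono[OF 2] 3 by blast
  then have "(derived ^^ 3) Bup = {mat 1}" using one_derived by (auto simp: numeral_3_eq_3)
  then show ?thesis unfolding msolvable_def by blast
qed

definition N1 :: "cmat set" where
  "N1 = {A. A$2$1 = 0 \<and> A$3$1 = 0 \<and> A$3$2 = 0 \<and> A$1$2 = 0 \<and> A$1$1 = 1 \<and> A$2$2 = 1 \<and> A$3$3 = 1}"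

lemma N1_SL3: "A \<in> N1 \<Longrightarrow> A \<in> SL3" by (auto simp: N1_def SL3_det)

lemma N1_sub: "msubgroup N1"
proof (rule msubgroupI)
  show "N1 \<subseteq> SL3" using N1_SL3 by blast
  show "mat 1 \<in> N1" by (simp add: N1_def one_entries)
  show "x ** y \<in> N1" if "x \<in> N1" "y \<in> N1" for x y
    using that by (simp add: N1_def mult_entry)
  show "minv x \<in> N1" if "x \<in> N1" for x
    using that N1_SL3[OF that] by (simp add: N1_def minv_entries)
qed

lemma H_entries: assumes "x \<in> Hgrp"
  shows "x$2$1 = 0" "x$3$1 = 0" "x$3$2 = 0" "x$1$2 = 0" "x$2$2 = 1" "x$3$3 = inverse (x$1$1)" "x$1$1 \<noteq> 0" "x \<in> SL3"
proof -
  obtain t a b where "t \<noteq> 0" "x = mat3 t 0 a 0 1 b 0 0 (inverse t)" using assms unfolding Hgrp_def by blast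
  then show "x$2$1 = 0" "x$3$1 = 0" "x$3$2 = 0" "x$1$2 = 0" "x$2$2 = 1" "x$3$3 = inverse (x$1$1)" "x$1$1 \<noteq> 0"
    by simp_all
  show "x \<in> SL3" using assms H_char by blast
qed

lemma H_comm: assumes "x \<in> Hgrp" "y \<in> Hgrp" shows "x ** y ** minv x ** minv y \<in> N1"
  using H_entries[OF assms(1)] H_entries[OF assms(2)]
  by (simp add: N1_def mult_entry minv_entries) (simp add: field_simps)

lemma N1_comm: assumes "x \<in> N1" "y \<in> N1" shows "x ** y ** minv x ** minv y \<in> {mat 1}"
  using assms N1_SL3[OF assms(1)] N1_SL3[OF assms(2)]
  by (simp add: N1_def mat3_eq_iff forall_3 one_entries mult_entry minv_entries)

lemma H_solvable: "msolvable Hgrp"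
proof -
  have 1: "derived Hgrp \<subseteq> N1" by (rule derived_le[OF N1_sub H_comm])
  have 2: "derived N1 \<subseteq> {mat 1}" by (rule derived_le[OF one_sub N1_comm])
  have "derived (derived Hgrp) \<subseteq> {mat 1}"
    using derived_mono[OF 1] 2 by blast
  then have "(derived ^^ 2) Hgrp = {mat 1}" using one_derived by (auto simp: numeral_2_eq_2)
  then show ?thesis unfolding msolvable_def by blast
qed

definition x0 :: cmat where "x0 = mat3 0 0 1 1 0 0 1 1 0"
definition x0i :: cmat where "x0i = mat3 0 1 0 0 (-1) 1 1 0 0"

definition fsph :: "cmat \<Rightarrow> complex" where
  "fsph g = g$3$1 * g$3$2 * (g$2$1 * g$3$2 - g$2$2 * g$3$1)"

lemma fsph_poly: "fsph \<in> poly_fun"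
proof -
  have "(\<lambda>g. g$3$1 * g$3$2 * (g$2$1 * g$3$2 + (-1) * (g$2$2 * g$3$1))) \<in> poly_fun"
    by (intro poly_fun.intros)
  moreover have "(\<lambda>g. g$3$1 * g$3$2 * (g$2$1 * g$3$2 + (-1) * (g$2$2 * g$3$1))) = fsph"
    by (rule ext) (simp add: fsph_def)
  ultimately show ?thesis by simp
qed

lemma x0_SL3: "x0 \<in> SL3" by (simp add: x0_def SL3_def mat3_det)

lemma orbit_sub: assumes "b \<in> Bup" "h \<in> Hgrp" shows "fsph (b ** x0 ** h) \<noteq> 0"
proof -
  have zb: "b$2$1 = 0" "b$3$1 = 0" "b$3$2 = 0" "b$3$3 = inverse (b$1$1 * b$2$2)" "b$1$1 \<noteq> 0" "b$2$2 \<noteq> 0"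
    using Bup_mat3[OF assms(1)] assms(1) by (auto simp: Bup_def) (metis mat3_entries(9))
  show ?thesis using H_entries[OF assms(2)] zb
    by (simp add: fsph_def mult_entry x0_def)
qed

lemma orbit_sup: assumes g: "g \<in> SL3" and f: "fsph g \<noteq> 0"
  shows "\<exists>b h. g = b ** x0 ** h \<and> b \<in> Bup \<and> h \<in> Hgrp"
proof -
  have g31: "g$3$1 \<noteq> 0" and g32: "g$3$2 \<noteq> 0" and dl: "g$3$1 * g$2$2 - g$3$2 * g$2$1 \<noteq> 0"
    using f by (auto simp: fsph_def algebra_simps)
  define t where "t = g$3$2 / g$3$1"
  have t0: "t \<noteq> 0" using g31 g32 by (simp add: t_def)
  define \<Delta> where "\<Delta> = g$3$1 * g$2$2 - g$3$2 * g$2$1"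
  define r1 where "r1 = - g$3$3 / t"
  define r2 where "r2 = - g$2$3 / t"
  define a where "a = (r1 * g$2$2 - g$3$2 * r2) / \<Delta>"
  define bb where "bb = (g$3$1 * r2 - g$2$1 * r1) / \<Delta>"
  define h' where "h' = mat3 t 0 a 0 1 bb 0 0 (inverse t)"
  have hH: "h' \<in> Hgrp" unfolding h'_def Hgrp_def using t0 by blast
  have hS: "h' \<in> SL3" using hH H_char by blast
  define b where "b = g ** h' ** x0i"
  have x0iS: "x0i \<in> SL3" by (simp add: x0i_def SL3_def mat3_det)
  have D0: "\<Delta> \<noteq> 0" using dl by (simp add: \<Delta>_def)
  have s1: "g$3$1 * a + g$3$2 * bb = r1"
  proof -
    have "g$3$1 * a + g$3$2 * bb = (g$3$1 * (r1 * g$2$2 - g$3$2 * r2) + g$3$2 * (g$3$1 * r2 - g$2$1 * r1)) / \<Delta>"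
      by (simp add: a_def bb_def add_divide_distrib)
    also have "g$3$1 * (r1 * g$2$2 - g$3$2 * r2) + g$3$2 * (g$3$1 * r2 - g$2$1 * r1) = r1 * \<Delta>"
      by (simp add: \<Delta>_def algebra_simps)
    finally show ?thesis using D0 by simp
  qed
  have s2: "g$2$1 * a + g$2$2 * bb = r2"
  proof -
    have "g$2$1 * a + g$2$2 * bb = (g$2$1 * (r1 * g$2$2 - g$3$2 * r2) + g$2$2 * (g$3$1 * r2 - g$2$1 * r1)) / \<Delta>"
      by (simp add: a_def bb_def add_divide_distrib)
    also have "g$2$1 * (r1 * g$2$2 - g$3$2 * r2) + g$2$2 * (g$3$1 * r2 - g$2$1 * r1) = r2 * \<Delta>"
      by (simp add: \<Delta>_def algebra_simps)
    finally show ?thesis using D0 by simp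
  qed
  have lin1: "g$2$1 * a + g$2$2 * bb + g$2$3 * inverse t = 0"
    using s2 t0 unfolding r2_def by (simp add: field_simps)
  have lin2: "g$3$1 * a + g$3$2 * bb + g$3$3 * inverse t = 0"
    using s1 t0 unfolding r1_def by (simp add: field_simps)
  have bB: "b \<in> Bup"
  proof -
    have "b \<in> SL3" unfolding b_def using g hS x0iS by (simp add: SL3_mult)
    moreover have "b$2$1 = 0" using lin1 by (simp add: b_def mult_entry h'_def x0i_def algebra_simps)
    moreover have "b$3$1 = 0" using lin2 by (simp add: b_def mult_entry h'_def x0i_def algebra_simps)
    moreover have "b$3$2 = 0" using g31 by (simp add: b_def mult_entry h'_def x0i_def t_def)
    ultimately show ?thesis by (simp add: Bup_def)
  qed
  have x0x0i: "x0i ** x0 = mat 1" by (simp add: x0_def x0i_def mat3_mult mat3_one)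
  have "b ** x0 ** minv h' = g ** h' ** (x0i ** x0) ** minv h'"
    by (simp add: b_def matrix_mul_assoc)
  also have "\<dots> = g ** (h' ** minv h')" by (simp add: x0x0i matrix_mul_assoc)
  also have "\<dots> = g" using SL3_inv(1)[OF hS] by simp
  finally have "g = b ** x0 ** minv h'" by simp
  moreover have "minv h' \<in> Hgrp" using H_sub hH unfolding msubgroup_def by blast
  ultimately show ?thesis using bB by blast
qed

lemma orbit_open: "zopen {b ** x0 ** h | b h. b \<in> Bup \<and> h \<in> Hgrp}"
proof -
  have eq: "{b ** x0 ** h | b h. b \<in> Bup \<and> h \<in> Hgrp} = {g \<in> SL3. fsph g \<noteq> 0}"
  proof
    show "{b ** x0 ** h | b h. b \<in> Bup \<and> h \<in> Hgrp} \<subseteq> {g \<in> SL3. fsph g \<noteq> 0}"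
    proof clarify
      fix b h assume "b \<in> Bup" "h \<in> Hgrp"
      then show "b ** x0 ** h \<in> SL3 \<and> fsph (b ** x0 ** h) \<noteq> 0"
        using orbit_sub x0_SL3 SL3_mult H_entries(8) by (auto simp: Bup_def)
    qed
    show "{g \<in> SL3. fsph g \<noteq> 0} \<subseteq> {b ** x0 ** h | b h. b \<in> Bup \<and> h \<in> Hgrp}"
      using orbit_sup by blast
  qed
  have "zclosed (SL3 - {g \<in> SL3. fsph g \<noteq> 0})"
    unfolding zclosed_def
    by (rule exI[of _ "{fsph}"]) (auto simp: fsph_poly)
  then show ?thesis unfolding eq zopen_def by auto
qed

lemma minv_minv: "A \<in> SL3 \<Longrightarrow> minv (minv A) = A"
  by (rule minv_unique) (simp_all add: SL3_inv)

lemma norm_intro: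
  assumes g: "g \<in> SL3" and 1: "\<And>k. k \<in> K \<Longrightarrow> g ** k ** minv g \<in> K"
    and 2: "\<And>k. k \<in> K \<Longrightarrow> minv g ** k ** g \<in> K"
  shows "g \<in> normalizer K"
proof -
  have "(\<lambda>h. g ** h ** minv g) ` K = K"
  proof
    show "(\<lambda>h. g ** h ** minv g) ` K \<subseteq> K" using 1 by blast
    show "K \<subseteq> (\<lambda>h. g ** h ** minv g) ` K"
    proof
      fix k assume k: "k \<in> K"
      have "g ** (minv g ** k ** g) ** minv g = (g ** minv g) ** k ** (g ** minv g)"
        by (simp add: matrix_mul_assoc)
      also have "\<dots> = k" using SL3_inv[OF g] by simp
      finally show "k \<in> (\<lambda>h. g ** h ** minv g) ` K" using 2[OF k] by (metis image_eqI)
    qed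
  qed
  then show ?thesis using g unfolding normalizer_def by blast
qed

lemma norm_D:
  assumes "g \<in> normalizer K" "k \<in> K"
  shows "g ** k ** minv g \<in> K" "g \<in> SL3"
  using assms unfolding normalizer_def by blast+

lemma conj_eq:
  assumes "g \<in> SL3" "g ** k ** minv g = k'"
  shows "g ** k = k' ** g"
proof -
  have "k' ** g = g ** k ** (minv g ** g)" using assms(2) by (auto simp: matrix_mul_assoc)
  then show ?thesis using SL3_inv(2)[OF assms(1)] by simp
qed

lemma conj_eq_ex:
  assumes "g \<in> normalizer K" "k \<in> K"
  obtains k' where "k' \<in> K" "g ** k = k' ** g"
  using norm_D[OF assms] conj_eq by blast

definition e13 :: cmat where "e13 = mat3 1 0 1 0 1 0 0 0 1"
definition e23 :: cmat where "e23 = mat3 1 0 0 0 1 1 0 0 1"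

lemma row3_zero:
  fixes g k k' :: cmat
  assumes "g ** e13 = k ** g" "g ** e23 = k' ** g"
    and "k$3$1 = 0" "k$3$2 = 0" "k'$3$1 = 0" "k'$3$2 = 0"
  shows "g$3$1 = 0" "g$3$2 = 0"
proof -
  have a: "(g ** e13)$3$1 = (k ** g)$3$1" "(g ** e13)$3$3 = (k ** g)$3$3" using assms(1) by simp_all
  then have a1: "g$3$1 = k$3$3 * g$3$1" "g$3$1 + g$3$3 = k$3$3 * g$3$3"
    using assms by (simp_all add: mult_entry e13_def)
  show "g$3$1 = 0"
  proof (cases "k$3$3 = 1")
    case True then show ?thesis using a1(2) by simp
  next
    case False
    then have "(1 - k$3$3) * g$3$1 = 0" using a1(1) by (simp add: algebra_simps)
    then show ?thesis using False by simp
  qed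
  have b: "(g ** e23)$3$2 = (k' ** g)$3$2" "(g ** e23)$3$3 = (k' ** g)$3$3" using assms(2) by simp_all
  then have b1: "g$3$2 = k'$3$3 * g$3$2" "g$3$2 + g$3$3 = k'$3$3 * g$3$3"
    using assms by (simp_all add: mult_entry e23_def)
  show "g$3$2 = 0"
  proof (cases "k'$3$3 = 1")
    case True then show ?thesis using b1(2) by simp
  next
    case False
    then have "(1 - k'$3$3) * g$3$2 = 0" using b1(1) by (simp add: algebra_simps)
    then show ?thesis using False by simp
  qed
qed

lemma e13_H: "e13 \<in> Hgrp" by (simp add: H_char e13_def SL3_def mat3_det)
lemma e23_H: "e23 \<in> Hgrp" by (simp add: H_char e23_def SL3_def mat3_det)
lemma e13_M: "e13 \<in> Mset" by (simp add: Mset_def e13_def SL3_def mat3_det)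
lemma e23_M: "e23 \<in> Mset" by (simp add: Mset_def e23_def SL3_def mat3_det)

lemma normH_sub: assumes g: "g \<in> normalizer Hgrp" shows "g \<in> Mset"
proof -
  have gS: "g \<in> SL3" using g normalizer_def by blast
  obtain k where k: "k \<in> Hgrp" "g ** e13 = k ** g" using conj_eq_ex[OF g e13_H] by blast
  obtain k' where k': "k' \<in> Hgrp" "g ** e23 = k' ** g" using conj_eq_ex[OF g e23_H] by blast
  have z: "g$3$1 = 0" "g$3$2 = 0"
    using row3_zero[OF k(2) k'(2)] H_entries[OF k(1)] H_entries[OF k'(1)] by simp_all
  let ?d = "mat3 2 0 0 0 1 0 0 0 (1/2)"
  have dH: "?d \<in> Hgrp" by (simp add: H_char SL3_def mat3_det)
  obtain h where h: "h \<in> Hgrp" "g ** ?d = h ** g" using conj_eq_ex[OF g dH] by blast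
  note he = H_entries[OF h(1)]
  have "g$3$3 * (g$1$1 * g$2$2 - g$1$2 * g$2$1) = 1" using gS z by (simp add: SL3_det algebra_simps)
  then have g33: "g$3$3 \<noteq> 0" by auto
  have "(g ** ?d)$3$3 = (h ** g)$3$3" using h(2) by simp
  then have "g$3$3 / 2 = inverse (h$1$1) * g$3$3" using he z by (simp add: mult_entry)
  then have "inverse (h$1$1) = 1/2" using g33 by (simp add: field_simps)
  then have h11: "h$1$1 = 2" by (metis inverse_eq_divide inverse_inverse_eq one_divide_eq_0_iff zero_neq_numeral inverse_unique mult.commute)
  have "(g ** ?d)$1$2 = (h ** g)$1$2" using h(2) by simp
  then have "g$1$2 = 2 * g$1$2" using he z h11 by (simp add: mult_entry)
  then have g12: "g$1$2 = 0" by simp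
  have "(g ** ?d)$2$1 = (h ** g)$2$1" using h(2) by simp
  then have "2 * g$2$1 = g$2$1" using he z by (simp add: mult_entry)
  then have g21: "g$2$1 = 0" by simp
  show ?thesis using z g12 g21 gS by (simp add: Mset_def)
qed

lemma M_entries: assumes "m \<in> Mset"
  shows "m$2$1 = 0" "m$3$1 = 0" "m$3$2 = 0" "m$1$2 = 0" "m$1$1 * m$2$2 * m$3$3 = 1" "m \<in> SL3"
  using assms by (auto simp: Mset_def SL3_det)

lemma M_conj_H: assumes "m \<in> Mset" "k \<in> Hgrp" shows "m ** k ** minv m \<in> Hgrp"
proof -
  note me = M_entries[OF assms(1)] and ke = H_entries[OF assms(2)]
  have S: "m ** k ** minv m \<in> SL3" using me(6) ke(8) by (simp add: SL3_mult SL3_inv)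
  show ?thesis unfolding H_char using S me ke
    by (simp add: mult_entry minv_entries) (simp add: algebra_simps)
qed

lemma M_normH: assumes "m \<in> Mset" shows "m \<in> normalizer Hgrp"
proof (rule norm_intro)
  show mS: "m \<in> SL3" using M_entries[OF assms] by simp
  show "m ** k ** minv m \<in> Hgrp" if "k \<in> Hgrp" for k using M_conj_H assms that by blast
  have mi: "minv m \<in> Mset" using Mset_sub assms unfolding msubgroup_def by blast
  show "minv m ** k ** m \<in> Hgrp" if "k \<in> Hgrp" for k
    using M_conj_H[OF mi that] minv_minv[OF mS] by simp
qed

lemma normH: "normalizer Hgrp = Mset"
  using normH_sub M_normH by blast

lemma TN_eq: "{t ** n | t n. t \<in> Tdiag \<and> n \<in> Ngrp} = Mset"
proof
  show "{t ** n | t n. t \<in> Tdiag \<and> n \<in> Ngrp} \<subseteq> Mset"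
  proof clarify
    fix t n assume "t \<in> Tdiag" "n \<in> Ngrp"
    then obtain s1 t1 u1 a b where "s1 * t1 * u1 = 1" "t = mat3 s1 0 0 0 t1 0 0 0 u1" "n = mat3 1 0 a 0 1 b 0 0 1"
      unfolding Tdiag_def Ngrp_def by blast
    then show "t ** n \<in> Mset" by (simp add: Mset_def mat3_mult SL3_def mat3_det)
  qed
  show "Mset \<subseteq> {t ** n | t n. t \<in> Tdiag \<and> n \<in> Ngrp}"
  proof
    fix A assume A: "A \<in> Mset"
    note ae = M_entries[OF A]
    have nz: "A$1$1 \<noteq> 0" "A$2$2 \<noteq> 0" using ae(5) by auto
    let ?t = "mat3 (A$1$1) 0 0 0 (A$2$2) 0 0 0 (A$3$3)"
    let ?n = "mat3 1 0 (A$1$3 / A$1$1) 0 1 (A$2$3 / A$2$2) 0 0 1"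
    have "?t \<in> Tdiag" using ae(5) unfolding Tdiag_def by blast
    moreover have "?n \<in> Ngrp" unfolding Ngrp_def by blast
    moreover have "A = ?t ** ?n" using ae nz by (subst mat3_eta) (simp add: mat3_mult)
    ultimately show "A \<in> {t ** n | t n. t \<in> Tdiag \<and> n \<in> Ngrp}" by blast
  qed
qed

definition Rset :: "cmat set" where
  "Rset = {A. A$1$1 = 0 \<and> A$2$2 = 0 \<and> A$3$1 = 0 \<and> A$3$2 = 0 \<and> A \<in> SL3}"

lemma R_conj: assumes "g \<in> Rset" "k \<in> Mset" shows "g ** k ** minv g \<in> Mset"
proof -
  have gS: "g \<in> SL3" using assms(1) by (simp add: Rset_def)
  note ke = M_entries[OF assms(2)]
  have S: "g ** k ** minv g \<in> SL3" using gS ke(6) by (simp add: SL3_mult SL3_inv)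
  show ?thesis using assms(1) S ke unfolding Mset_def Rset_def
    by (simp add: mult_entry minv_entries[OF gS])
qed

lemma R_inv: assumes "g \<in> Rset" shows "minv g \<in> Rset"
  using assms SL3_inv(3)[of g] by (simp add: Rset_def minv_entries)

lemma rho_SL3: "rho \<in> SL3" by (simp add: rho_def SL3_def mat3_det)
lemma rho_rho: "rho ** rho = mat 1" by (simp add: rho_def mat3_mult mat3_one)

lemma rhoM_R: assumes "m \<in> Mset" shows "rho ** m \<in> Rset"
  using M_entries[OF assms] rho_SL3 by (simp add: Rset_def rho_def mult_entry SL3_mult)

lemma R_norm: assumes "g \<in> Rset" shows "g \<in> normalizer Mset"
proof (rule norm_intro)
  show gS: "g \<in> SL3" using assms by (simp add: Rset_def)
  show "g ** k ** minv g \<in> Mset" if "k \<in> Mset" for k using R_conj assms that by blast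
  show "minv g ** k ** g \<in> Mset" if "k \<in> Mset" for k
    using R_conj[OF R_inv[OF assms] that] minv_minv[OF gS] by simp
qed

lemma M_norm: assumes "g \<in> Mset" shows "g \<in> normalizer Mset"
proof (rule norm_intro)
  show gS: "g \<in> SL3" using M_entries[OF assms] by simp
  have gi: "minv g \<in> Mset" using Mset_sub assms unfolding msubgroup_def by blast
  show "g ** k ** minv g \<in> Mset" if "k \<in> Mset" for k
    using Mset_sub assms that gi unfolding msubgroup_def by blast
  show "minv g ** k ** g \<in> Mset" if "k \<in> Mset" for k
    using Mset_sub assms that gi unfolding msubgroup_def by blast
qed

lemma normM_sub: assumes g: "g \<in> normalizer Mset" shows "g \<in> Mset \<union> (\<lambda>x. rho ** x) ` Mset"
proof -
  have gS: "g \<in> SL3" using g normalizer_def by blast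
  obtain k where k: "k \<in> Mset" "g ** e13 = k ** g" using conj_eq_ex[OF g e13_M] by blast
  obtain k' where k': "k' \<in> Mset" "g ** e23 = k' ** g" using conj_eq_ex[OF g e23_M] by blast
  have z: "g$3$1 = 0" "g$3$2 = 0"
    using row3_zero[OF k(2) k'(2)] M_entries[OF k(1)] M_entries[OF k'(1)] by simp_all
  let ?d = "mat3 2 0 0 0 3 0 0 0 (1/6)"
  have dM: "?d \<in> Mset" by (simp add: Mset_def SL3_def mat3_det)
  obtain h where h: "h \<in> Mset" "g ** ?d = h ** g" using conj_eq_ex[OF g dM] by blast
  note he = M_entries[OF h(1)]
  have det: "g$3$3 * (g$1$1 * g$2$2 - g$1$2 * g$2$1) = 1" using gS z by (simp add: SL3_det algebra_simps)
  have "(g ** ?d)$1$1 = (h ** g)$1$1" "(g ** ?d)$1$2 = (h ** g)$1$2"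
       "(g ** ?d)$2$1 = (h ** g)$2$1" "(g ** ?d)$2$2 = (h ** g)$2$2" using h(2) by simp_all
  then have eqs: "2 * g$1$1 = h$1$1 * g$1$1" "3 * g$1$2 = h$1$1 * g$1$2"
    "2 * g$2$1 = h$2$2 * g$2$1" "3 * g$2$2 = h$2$2 * g$2$2"
    using he z by (simp_all add: mult_entry)
  show ?thesis
  proof (cases "g$1$1 = 0")
    case False
    then have "h$1$1 = 2" using eqs(1) by simp
    then have g12: "g$1$2 = 0" using eqs(2) by simp
    then have "g$2$2 \<noteq> 0" using det by auto
    then have "h$2$2 = 3" using eqs(4) by simp
    then have "g$2$1 = 0" using eqs(3) by simp
    then have "g \<in> Mset" using z g12 gS by (simp add: Mset_def)
    then show ?thesis by blast
  next
    case True
    then have nz: "g$1$2 \<noteq> 0" "g$2$1 \<noteq> 0" using det by auto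
    then have "h$2$2 = 2" using eqs(3) by simp
    then have g22: "g$2$2 = 0" using eqs(4) by simp
    have m: "rho ** g \<in> Mset" using True g22 z gS rho_SL3
      by (simp add: Mset_def rho_def mult_entry SL3_mult)
    have "rho ** (rho ** g) = g" by (simp add: matrix_mul_assoc rho_rho matrix_mul_lid)
    then show ?thesis using m by (metis UnI2 image_eqI)
  qed
qed

lemma normM: "normalizer Mset = Mset \<union> (\<lambda>x. rho ** x) ` Mset"
proof
  show "normalizer Mset \<subseteq> Mset \<union> (\<lambda>x. rho ** x) ` Mset" using normM_sub by blast
  show "Mset \<union> (\<lambda>x. rho ** x) ` Mset \<subseteq> normalizer Mset"
    using M_norm R_norm rhoM_R by blast
qed

lemma rho_notM: "rho \<notin> Mset" by (simp add: Mset_def rho_def)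

lemma normM_ne: "normalizer Mset \<noteq> Mset"
proof -
  have "rho ** mat 1 \<in> (\<lambda>x. rho ** x) ` Mset" using Mset_sub unfolding msubgroup_def by blast
  then have "rho \<in> normalizer Mset" unfolding normM by simp
  then show ?thesis using rho_notM by blast
qed

definition E12 :: "complex \<Rightarrow> cmat" where "E12 c = mat3 1 c 0 0 1 0 0 0 1"
definition E21 :: "complex \<Rightarrow> cmat" where "E21 c = mat3 1 0 0 c 1 0 0 0 1"
definition E13 :: "complex \<Rightarrow> cmat" where "E13 c = mat3 1 0 c 0 1 0 0 0 1"
definition E31 :: "complex \<Rightarrow> cmat" where "E31 c = mat3 1 0 0 0 1 0 c 0 1"
definition E23 :: "complex \<Rightarrow> cmat" where "E23 c = mat3 1 0 0 0 1 c 0 0 1"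
definition E32 :: "complex \<Rightarrow> cmat" where "E32 c = mat3 1 0 0 0 1 0 0 c 1"
definition dg :: "complex \<Rightarrow> complex \<Rightarrow> complex \<Rightarrow> cmat" where "dg a b c = mat3 a 0 0 0 b 0 0 0 c"
definition LR :: "complex \<Rightarrow> complex \<Rightarrow> cmat" where "LR a b = mat3 1 0 0 0 1 0 a b 1"

lemmas Edefs = E12_def E21_def E13_def E31_def E23_def E32_def dg_def LR_def

lemma minv_E:
  "minv (E12 c) = E12 (-c)" "minv (E21 c) = E21 (-c)" "minv (E13 c) = E13 (-c)"
  "minv (E31 c) = E31 (-c)" "minv (E23 c) = E23 (-c)" "minv (E32 c) = E32 (-c)"
  "minv (LR a b) = LR (-a) (-b)"
  by (rule minv_unique; simp add: Edefs mat3_mult mat3_one)+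

lemma minv_dg: "a \<noteq> 0 \<Longrightarrow> b \<noteq> 0 \<Longrightarrow> c \<noteq> 0 \<Longrightarrow> minv (dg a b c) = dg (inverse a) (inverse b) (inverse c)"
  by (rule minv_unique; simp add: Edefs mat3_mult mat3_one)

lemma msub_mult: "msubgroup K \<Longrightarrow> x \<in> K \<Longrightarrow> y \<in> K \<Longrightarrow> x ** y \<in> K"
  unfolding msubgroup_def by blast
lemma msub_inv: "msubgroup K \<Longrightarrow> x \<in> K \<Longrightarrow> minv x \<in> K"
  unfolding msubgroup_def by blast
lemma msub_one: "msubgroup K \<Longrightarrow> mat 1 \<in> K"
  unfolding msubgroup_def by blast
lemma msub_SL3: "msubgroup K \<Longrightarrow> K \<subseteq> SL3"
  unfolding msubgroup_def by blast

lemma nonsolv_step: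
  fixes E F :: "complex \<Rightarrow> cmat"
  assumes K: "msubgroup K" and EK: "\<forall>c. E c \<in> K" and FK: "\<forall>c. F c \<in> K"
    and d: "d = E 2 ** F (-1/2) ** E 2 ** E (-1) ** F 1 ** E (-1)"
    and cE: "\<forall>b. E (3*b) = d ** E b ** minv d ** minv (E b)"
    and cF: "\<forall>b. F (3*b) = minv d ** F b ** minv (minv d) ** minv (F b)"
  shows "\<forall>c. E c \<in> derived K \<and> F c \<in> derived K"
proof
  fix c
  have dK: "d \<in> K" unfolding d using K EK FK by (intro msub_mult) auto
  have diK: "minv d \<in> K" using msub_inv[OF K dK] .
  have "E (3 * (c/3)) \<in> derived K" unfolding cE[rule_format, of "c/3"] by (rule comm_derived[OF dK EK[rule_format]])
  then have 1: "E c \<in> derived K" by simp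
  have "F (3 * (c/3)) \<in> derived K" unfolding cF[rule_format, of "c/3"] by (rule comm_derived[OF diK FK[rule_format]])
  then have "F c \<in> derived K" by simp
  then show "E c \<in> derived K \<and> F c \<in> derived K" using 1 by simp
qed

lemma nonsolv:
  fixes E F :: "complex \<Rightarrow> cmat"
  assumes K: "msubgroup K" and EK: "\<forall>c. E c \<in> K" and FK: "\<forall>c. F c \<in> K"
    and d: "d = E 2 ** F (-1/2) ** E 2 ** E (-1) ** F 1 ** E (-1)"
    and cE: "\<forall>b. E (3*b) = d ** E b ** minv d ** minv (E b)"
    and cF: "\<forall>b. F (3*b) = minv d ** F b ** minv (minv d) ** minv (F b)"
    and E1: "E 1 \<noteq> mat 1"
  shows "\<not> msolvable K"
proof
  have all: "msubgroup ((derived ^^ n) K) \<and> (\<forall>c. E c \<in> (derived ^^ n) K \<and> F c \<in> (derived ^^ n) K)" for n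
  proof (induction n)
    case 0 then show ?case using K EK FK by simp
  next
    case (Suc n)
    then have m: "msubgroup ((derived ^^ n) K)" and e: "\<forall>c. E c \<in> (derived ^^ n) K" and f: "\<forall>c. F c \<in> (derived ^^ n) K" by auto
    have "msubgroup (derived ((derived ^^ n) K))" using derived_sub[OF msub_SL3[OF m]] .
    moreover have "\<forall>c. E c \<in> derived ((derived ^^ n) K) \<and> F c \<in> derived ((derived ^^ n) K)"
      by (rule nonsolv_step[OF m e f d cE cF])
    ultimately show ?case by simp
  qed
  assume "msolvable K"
  then obtain n where "(derived ^^ n) K = {mat 1}" unfolding msolvable_def by blast
  then show False using all[of n] E1 by auto
qed

lemma pair12: "msubgroup K \<Longrightarrow> \<forall>c. E12 c \<in> K \<Longrightarrow> \<forall>c. E21 c \<in> K \<Longrightarrow> \<not> msolvable K"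
  by (rule nonsolv[where E = E12 and F = E21 and d = "dg 2 (1/2) 1"])
     (simp_all add: minv_E minv_dg, simp_all add: Edefs mat3_mult mat3_one mat3_eq)

lemma pair13: "msubgroup K \<Longrightarrow> \<forall>c. E13 c \<in> K \<Longrightarrow> \<forall>c. E31 c \<in> K \<Longrightarrow> \<not> msolvable K"
  by (rule nonsolv[where E = E13 and F = E31 and d = "dg 2 1 (1/2)"])
     (simp_all add: minv_E minv_dg, simp_all add: Edefs mat3_mult mat3_one mat3_eq)

lemma pair23: "msubgroup K \<Longrightarrow> \<forall>c. E23 c \<in> K \<Longrightarrow> \<forall>c. E32 c \<in> K \<Longrightarrow> \<not> msolvable K"
  by (rule nonsolv[where E = E23 and F = E32 and d = "dg 1 2 (1/2)"])
     (simp_all add: minv_E minv_dg, simp_all add: Edefs mat3_mult mat3_one mat3_eq)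

lemma dg_Bup: "a * b * c = 1 \<Longrightarrow> dg a b c \<in> Bup"
  by (simp add: Bup_def dg_def SL3_def mat3_det)

lemma E_Bup: "E12 c \<in> Bup" "E13 c \<in> Bup" "E23 c \<in> Bup"
  by (simp_all add: Bup_def Edefs SL3_def mat3_det)

lemma scale31:
  assumes L: "msubgroup L" "Bup \<subseteq> L" and e: "E31 c0 \<in> L" and c0: "c0 \<noteq> 0"
  shows "E31 c \<in> L"
proof (cases "c = 0")
  case True
  then have "E31 c = mat 1" by (simp add: Edefs mat3_one)
  then show ?thesis using msub_one[OF L(1)] by simp
next
  case False
  define l where "l = c / c0"
  have l0: "l \<noteq> 0" using False c0 by (simp add: l_def)
  have dB: "dg 1 (inverse l) l \<in> L" using L(2) dg_Bup[of 1 "inverse l" l] l0 by auto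
  have "dg 1 (inverse l) l ** E31 c0 ** minv (dg 1 (inverse l) l) \<in> L"
    using dB e L(1) by (intro msub_mult msub_inv) auto
  moreover have "dg 1 (inverse l) l ** E31 c0 ** minv (dg 1 (inverse l) l) = E31 c"
    using l0 c0 by (simp add: minv_dg) (simp add: Edefs mat3_mult mat3_eq l_def)
  ultimately show ?thesis by simp
qed

lemma scale32:
  assumes L: "msubgroup L" "Bup \<subseteq> L" and e: "E32 c0 \<in> L" and c0: "c0 \<noteq> 0"
  shows "E32 c \<in> L"
proof (cases "c = 0")
  case True
  then have "E32 c = mat 1" by (simp add: Edefs mat3_one)
  then show ?thesis using msub_one[OF L(1)] by simp
next
  case False
  define l where "l = c / c0"
  have l0: "l \<noteq> 0" using False c0 by (simp add: l_def)
  have dB: "dg (inverse l) 1 l \<in> L" using L(2) dg_Bup[of "inverse l" 1 l] l0 by auto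
  have "dg (inverse l) 1 l ** E32 c0 ** minv (dg (inverse l) 1 l) \<in> L"
    using dB e L(1) by (intro msub_mult msub_inv) auto
  moreover have "dg (inverse l) 1 l ** E32 c0 ** minv (dg (inverse l) 1 l) = E32 c"
    using l0 c0 by (simp add: minv_dg) (simp add: Edefs mat3_mult mat3_eq l_def)
  ultimately show ?thesis by simp
qed

lemma scale21:
  assumes L: "msubgroup L" "Bup \<subseteq> L" and e: "E21 c0 \<in> L" and c0: "c0 \<noteq> 0"
  shows "E21 c \<in> L"
proof (cases "c = 0")
  case True
  then have "E21 c = mat 1" by (simp add: Edefs mat3_one)
  then show ?thesis using msub_one[OF L(1)] by simp
next
  case False
  define l where "l = c / c0"
  have l0: "l \<noteq> 0" using False c0 by (simp add: l_def)
  have dB: "dg 1 l (inverse l) \<in> L" using L(2) dg_Bup[of 1 l "inverse l"] l0 by auto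
  have "dg 1 l (inverse l) ** E21 c0 ** minv (dg 1 l (inverse l)) \<in> L"
    using dB e L(1) by (intro msub_mult msub_inv) auto
  moreover have "dg 1 l (inverse l) ** E21 c0 ** minv (dg 1 l (inverse l)) = E21 c"
    using l0 c0 by (simp add: minv_dg) (simp add: Edefs mat3_mult mat3_eq l_def)
  ultimately show ?thesis by simp
qed

lemma lowrow:
  assumes L: "msubgroup L" "Bup \<subseteq> L" and n: "LR a b \<in> L"
  shows "E31 (3*a/4) \<in> L" "E32 (3*b/4) \<in> L"
proof -
  have d1: "dg 1 2 (1/2) \<in> L" and d2: "dg 2 1 (1/2) \<in> L" using L(2) dg_Bup by auto
  have p: "dg 2 1 (1/2) ** LR a b ** minv (dg 2 1 (1/2)) = LR (a/4) (b/2)"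
    by (simp add: minv_dg) (simp add: Edefs mat3_mult mat3_eq)
  have q: "dg 1 2 (1/2) ** LR a b ** minv (dg 1 2 (1/2)) = LR (a/2) (b/4)"
    by (simp add: minv_dg) (simp add: Edefs mat3_mult mat3_eq)
  have pL: "LR (a/4) (b/2) \<in> L" unfolding p[symmetric] using L(1) d2 n by (intro msub_mult msub_inv) auto
  have qL: "LR (a/2) (b/4) \<in> L" unfolding q[symmetric] using L(1) d1 n by (intro msub_mult msub_inv) auto
  have "LR (a/2) (b/4) ** LR (a/2) (b/4) ** minv (LR (a/4) (b/2)) \<in> L"
    using L(1) pL qL by (intro msub_mult msub_inv) auto
  moreover have "LR (a/2) (b/4) ** LR (a/2) (b/4) ** minv (LR (a/4) (b/2)) = E31 (3*a/4)"
    by (simp add: minv_E) (simp add: Edefs mat3_mult mat3_eq)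
  ultimately show "E31 (3*a/4) \<in> L" by simp
  have "LR (a/4) (b/2) ** LR (a/4) (b/2) ** minv (LR (a/2) (b/4)) \<in> L"
    using L(1) pL qL by (intro msub_mult msub_inv) auto
  moreover have "LR (a/4) (b/2) ** LR (a/4) (b/2) ** minv (LR (a/2) (b/4)) = E32 (3*b/4)"
    by (simp add: minv_E) (simp add: Edefs mat3_mult mat3_eq)
  ultimately show "E32 (3*b/4) \<in> L" by simp
qed

lemma lowrow_contra:
  assumes L: "msubgroup L" "Bup \<subseteq> L" "msolvable L" and n: "LR a b \<in> L" and ab: "a \<noteq> 0 \<or> b \<noteq> 0"
  shows False
proof -
  have E12: "\<forall>c. E12 c \<in> L" "\<forall>c. E13 c \<in> L" "\<forall>c. E23 c \<in> L" using L(2) E_Bup by auto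
  note lr = lowrow[OF L(1,2) n]
  show False
  proof (cases "a = 0")
    case False
    then have "\<forall>c. E31 c \<in> L" using scale31[OF L(1,2) lr(1)] by simp
    then show False using pair13[OF L(1) E12(2)] L(3) by blast
  next
    case True
    then have "b \<noteq> 0" using ab by simp
    then have "\<forall>c. E32 c \<in> L" using scale32[OF L(1,2) lr(2)] by simp
    then show False using pair23[OF L(1) E12(3)] L(3) by blast
  qed
qed

lemma conjA:
  assumes y: "y \<in> SL3" and z: "y$1$1 = 0" "y$2$1 = 0"
  shows "y ** E13 1 ** minv y = LR (-(y$3$1^2 * y$2$2)) (y$3$1^2 * y$1$2)"
proof -
  have det: "y$3$1 * (y$1$2 * y$2$3 - y$1$3 * y$2$2) = 1" using y z by (simp add: SL3_det algebra_simps)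
  show ?thesis
    unfolding mat3_eq_iff forall_3 using det z
    by (simp add: mult_entry minv_entries[OF y] Edefs power2_eq_square) (simp_all add: algebra_simps)
qed


lemma conjB:
  assumes y: "y \<in> SL3" and z: "y$1$2 = 0" "y$2$2 = 0" "y$3$1 = 0"
  shows "y ** E23 1 ** minv y = LR (y$3$2^2 * y$2$1) (-(y$3$2^2 * y$1$1))"
proof -
  have det: "y$3$2 * (y$1$3 * y$2$1 - y$1$1 * y$2$3) = 1" using y z by (simp add: SL3_det algebra_simps)
  show ?thesis
    unfolding mat3_eq_iff forall_3 using det z
    by (simp add: mult_entry minv_entries[OF y] Edefs power2_eq_square) (simp_all add: algebra_simps)
qed

lemma conjC:
  assumes y: "y \<in> SL3" and z: "y$1$1 = 0" "y$3$1 = 0" "y$3$2 = 0"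
  shows "y ** E12 1 ** minv y = mat3 1 0 0 (-(y$2$1^2 * y$3$3)) 1 (y$2$1^2 * y$1$3) 0 0 1"
proof -
  have det: "- (y$3$3 * y$1$2 * y$2$1) = 1" using y z by (simp add: SL3_det algebra_simps)
  show ?thesis
    unfolding mat3_eq_iff forall_3 using det z
    by (simp add: mult_entry minv_entries[OF y] Edefs power2_eq_square) (simp_all add: algebra_simps)
qed

lemma Bup_max:
  assumes L: "msubgroup L" "msolvable L" "Bup \<subseteq> L"
  shows "L \<subseteq> Bup"
proof
  fix g assume gL: "g \<in> L"
  have gS: "g \<in> SL3" using gL msub_SL3[OF L(1)] by blast
  show "g \<in> Bup"
  proof (rule ccontr)
    assume nB: "g \<notin> Bup"
    have mL: "\<And>x y. x \<in> L \<Longrightarrow> y \<in> L \<Longrightarrow> x ** y \<in> L" using msub_mult[OF L(1)] by blast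
    have iL: "\<And>x. x \<in> L \<Longrightarrow> minv x \<in> L" using msub_inv[OF L(1)] by blast
    have BL: "\<And>x. x \<in> Bup \<Longrightarrow> x \<in> L" using L(3) by blast
    show False
    proof (cases "g$3$1 = 0")
      case False
      define b1 where "b1 = mat3 1 0 (-(g$1$1/g$3$1)) 0 1 (-(g$2$1/g$3$1)) 0 0 1"
      have b1B: "b1 \<in> Bup" by (simp add: b1_def Bup_def SL3_def mat3_det)
      define y where "y = b1 ** g"
      have yL: "y \<in> L" unfolding y_def by (rule mL[OF BL[OF b1B] gL])
      have yS: "y \<in> SL3" using yL msub_SL3[OF L(1)] by blast
      have yz: "y$1$1 = 0" "y$2$1 = 0" "y$3$1 = g$3$1"
        using False by (simp_all add: y_def b1_def mult_entry)
      have det: "y$3$1 * (y$1$2 * y$2$3 - y$1$3 * y$2$2) = 1" using yS yz by (simp add: SL3_det algebra_simps)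
      have nL: "y ** E13 1 ** minv y \<in> L" by (rule mL[OF mL[OF yL BL[OF E_Bup(2)]] iL[OF yL]])
      show False
      proof (rule lowrow_contra[OF L(1,3,2)])
        show "LR (-(y$3$1^2 * y$2$2)) (y$3$1^2 * y$1$2) \<in> L" using nL conjA[OF yS yz(1,2)] by simp
        show "-(y$3$1^2 * y$2$2) \<noteq> 0 \<or> y$3$1^2 * y$1$2 \<noteq> 0" using det by auto
      qed
    next
      case g31: True
      show False
      proof (cases "g$3$2 = 0")
        case False
        define b1 where "b1 = mat3 1 0 (-(g$1$2/g$3$2)) 0 1 (-(g$2$2/g$3$2)) 0 0 1"
        have b1B: "b1 \<in> Bup" by (simp add: b1_def Bup_def SL3_def mat3_det)
        define y where "y = b1 ** g"
        have yL: "y \<in> L" unfolding y_def by (rule mL[OF BL[OF b1B] gL])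
        have yS: "y \<in> SL3" using yL msub_SL3[OF L(1)] by blast
        have yz: "y$1$2 = 0" "y$2$2 = 0" "y$3$1 = 0"
          using False g31 by (simp_all add: y_def b1_def mult_entry)
        have det: "y$3$2 * (y$1$3 * y$2$1 - y$1$1 * y$2$3) = 1" using yS yz by (simp add: SL3_det algebra_simps)
        have nL: "y ** E23 1 ** minv y \<in> L" by (rule mL[OF mL[OF yL BL[OF E_Bup(3)]] iL[OF yL]])
        show False
        proof (rule lowrow_contra[OF L(1,3,2)])
          show "LR (y$3$2^2 * y$2$1) (-(y$3$2^2 * y$1$1)) \<in> L" using nL conjB[OF yS yz] by simp
          show "y$3$2^2 * y$2$1 \<noteq> 0 \<or> -(y$3$2^2 * y$1$1) \<noteq> 0" using det by auto
        qed
      next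
        case g32: True
        have g21: "g$2$1 \<noteq> 0" using nB g31 g32 gS by (auto simp: Bup_def)
        define b1 where "b1 = mat3 1 (-(g$1$1/g$2$1)) 0 0 1 0 0 0 1"
        have b1B: "b1 \<in> Bup" by (simp add: b1_def Bup_def SL3_def mat3_det)
        define y where "y = b1 ** g"
        have yL: "y \<in> L" unfolding y_def by (rule mL[OF BL[OF b1B] gL])
        have yS: "y \<in> SL3" using yL msub_SL3[OF L(1)] by blast
        have yz: "y$1$1 = 0" "y$3$1 = 0" "y$3$2 = 0"
          using g21 g31 g32 by (simp_all add: y_def b1_def mult_entry)
        have det: "- (y$3$3 * y$1$2 * y$2$1) = 1" using yS yz by (simp add: SL3_det algebra_simps)
        have nL: "y ** E12 1 ** minv y \<in> L" by (rule mL[OF mL[OF yL BL[OF E_Bup(1)]] iL[OF yL]])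
        let ?a = "-(y$2$1^2 * y$3$3)" and ?c = "y$2$1^2 * y$1$3"
        have "mat3 1 0 0 ?a 1 ?c 0 0 1 ** E23 (- ?c) \<in> L" using mL[OF nL BL[OF E_Bup(3)]] conjC[OF yS yz] by simp
        moreover have "mat3 1 0 0 ?a 1 ?c 0 0 1 ** E23 (- ?c) = E21 ?a" by (simp add: Edefs mat3_mult)
        ultimately have e: "E21 ?a \<in> L" by simp
        have a0: "?a \<noteq> 0" using det by auto
        have "\<forall>c. E21 c \<in> L" using scale21[OF L(1,3) e a0] by simp
        moreover have "\<forall>c. E12 c \<in> L" using BL[OF E_Bup(1)] by simp
        ultimately show False using pair12[OF L(1)] L(2) by blast
      qed
    qed
  qed
qed


lemma Bup_borel: "borel Bup"
  unfolding borel_def closed_subgroup_def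
  using Bup_sub Bup_zclosed Bup_zconnected Bup_solvable Bup_max unfolding closed_subgroup_def by blast

theorem mainTheorem8:
  shows "closed_subgroup Hgrp \<and> zconnected Hgrp \<and> msolvable Hgrp \<and> spherical Hgrp
    \<and> normalizer Hgrp = {t ** n | t n. t \<in> Tdiag \<and> n \<in> Ngrp}
    \<and> normalizer (normalizer Hgrp) = normalizer Hgrp \<union> (\<lambda>x. rho ** x) ` normalizer Hgrp
    \<and> normalizer (normalizer Hgrp) \<noteq> normalizer Hgrp"
proof -
  have cl: "closed_subgroup Hgrp" unfolding closed_subgroup_def using H_sub H_zclosed by blast
  have sph: "spherical Hgrp" unfolding spherical_def using cl Bup_borel x0_SL3 orbit_open by blast
  show ?thesis using cl sph H_zconnected H_solvable normH TN_eq normM normM_ne by simp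
qed

end
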